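(* Let $n > 2k+1$. Every deterministic algorithm that, on every valid instance with $n$ elements and $k$ corrupted elements, outputs a set of exactly $2k+1$ elements containing the uncorrupted maximum, must make at least $(n-(2k+1))(k+1) = nk + (n - 2k^2 - 3k - 1)$ comparison queries on some instance.
   Context: Model: there are $n$ elements $x_1,\dots,x_n$, exactly $k$ of which are corrupted (unknown to the algorithm). For every pair of distinct elements the comparison graph (a tournament) specifies which one is larger. The comparison graph restricted to the $n-k$ uncorrupted elements is acyclic; comparisons involving corrupted elements may be oriented arbitrarily. The uncorrupted maximum is the uncorrupted element larger than every other uncorrupted element. An instance is a comparison graph together with a valid set of $k$ corrupted elements. An algorithm knows $n$ and $k$, may query the orientation of any pair (a comparison query, answered according to the comparison graph), and outputs a set of elements. *)

theory Defs
  imports Main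
begin

text \<open>Elements are 0,...,n-1.  A comparison graph is a relation T where
  T i j means "i is larger than j".  It is a tournament on {0..<n}
  (and empty outside it, so that ill-formed queries carry no information).\<close>

definition tournament :: "nat \<Rightarrow> (nat \<Rightarrow> nat \<Rightarrow> bool) \<Rightarrow> bool" where
  "tournament n T \<longleftrightarrow>
     (\<forall>i j. T i j \<longrightarrow> i < n \<and> j < n \<and> i \<noteq> j) \<and>
     (\<forall>i j. T i j \<longrightarrow> \<not> T j i) \<and>
     (\<forall>i j. i < n \<longrightarrow> j < n \<longrightarrow> i \<noteq> j \<longrightarrow> T i j \<or> T j i)"

definition valid_instance ::
  "nat \<Rightarrow> nat \<Rightarrow> (nat \<Rightarrow> nat \<Rightarrow> bool) \<Rightarrow> nat set \<Rightarrow> bool" where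
  "valid_instance n k T C \<longleftrightarrow>
     tournament n T \<and> C \<subseteq> {..<n} \<and> card C = k \<and>
     acyclic {(i, j). T i j \<and> i \<notin> C \<and> j \<notin> C}"

definition uncorrupted_max ::
  "nat \<Rightarrow> (nat \<Rightarrow> nat \<Rightarrow> bool) \<Rightarrow> nat set \<Rightarrow> nat \<Rightarrow> bool" where
  "uncorrupted_max n T C u \<longleftrightarrow>
     u < n \<and> u \<notin> C \<and> (\<forall>v. v < n \<longrightarrow> v \<notin> C \<longrightarrow> v \<noteq> u \<longrightarrow> T u v)"

text \<open>Deterministic (adaptive) comparison algorithms as decision trees:
  Query i j t f asks whether i is larger than j and continues with t or f.\<close>

datatype alg = Output "nat set" | Query nat nat alg alg

fun run :: "alg \<Rightarrow> (nat \<Rightarrow> nat \<Rightarrow> bool) \<Rightarrow> nat set" where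
  "run (Output S) T = S"
| "run (Query i j t f) T = (if T i j then run t T else run f T)"

fun queries :: "alg \<Rightarrow> (nat \<Rightarrow> nat \<Rightarrow> bool) \<Rightarrow> nat" where
  "queries (Output S) T = 0"
| "queries (Query i j t f) T = Suc (if T i j then queries t T else queries f T)"

end

theory Submission
  imports Defs
begin

fun wins :: "alg \<Rightarrow> (nat \<Rightarrow> nat \<Rightarrow> bool) \<Rightarrow> (nat \<times> nat) set" where
  "wins (Output S) T = {}"
| "wins (Query i j t f) T = (if T i j then insert (i,j) (wins t T)
     else if T j i then insert (j,i) (wins f T) else wins f T)"

lemma wins_finite: "finite (wins A T)"
  by (induction A) auto

lemma wins_card: "card (wins A T) \<le> queries A T"
proof (induction A)
  case (Output x)
  then show ?case by simp
next
  case (Query i j t f)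
  then show ?case
    using wins_finite[of t T] wins_finite[of f T]
    by (auto simp: card_insert_if)
qed

lemma wins_T: "p \<in> wins A T \<Longrightarrow> T (fst p) (snd p)"
  by (induction A) (auto split: if_splits)

lemma run_agree:
  assumes "\<forall>p \<in> wins A T. T' (fst p) (snd p)"
    and "\<forall>i j. T' i j \<longrightarrow> \<not> T' j i"
    and "\<forall>i j. T' i j \<longrightarrow> T i j \<or> T j i"
  shows "run A T' = run A T"
  using assms(1)
proof (induction A)
  case (Output x)
  then show ?case by simp
next
  case (Query i j t f)
  show ?case
  proof (cases "T i j")
    case True
    then show ?thesis using Query by auto
  next
    case False
    have "\<not> T' i j"
    proof
      assume h: "T' i j"
      then have "T j i" using False assms(3) by blast
      then have "T' j i" using Query.prems False by auto
      then show False using h assms(2) by blast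
    qed
    moreover have "\<forall>p \<in> wins f T. T' (fst p) (snd p)"
      using Query.prems False by (auto split: if_splits)
    ultimately show ?thesis using Query False by auto
  qed
qed

lemma acyc_rank:
  fixes r :: "nat \<Rightarrow> nat"
  assumes "R \<subseteq> {(i,j). r j < r i}"
  shows "acyclic R"
proof -
  have "wf (inv_image {(a,b). a < b} r)"
    by (intro wf_inv_image) (simp add: wf_less)
  then have "acyclic (inv_image {(a,b). a < b} r)" by (rule wf_acyclic)
  moreover have "R\<inverse> \<subseteq> inv_image {(a,b). a < b} r" using assms by auto
  ultimately have "acyclic (R\<inverse>)" by (rule acyclic_subset)
  then show ?thesis by (simp add: acyclic_converse)
qed

theorem mainTheorem3:
  fixes n k :: nat and A :: alg
  assumes "n > 2 * k + 1"
    and "\<forall>T C. valid_instance n k T C \<longrightarrow>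
           run A T \<subseteq> {..<n} \<and> card (run A T) = 2 * k + 1 \<and>
           (\<forall>u. uncorrupted_max n T C u \<longrightarrow> u \<in> run A T)"
  shows "\<exists>T C. valid_instance n k T C \<and> queries A T \<ge> (n - (2 * k + 1)) * (k + 1)"
proof -
  define T0 where "T0 = (\<lambda>i j. i < n \<and> j < n \<and> j < i)"
  have tT0: "tournament n T0" unfolding tournament_def T0_def by auto
  have v0: "valid_instance n k T0 {..<k}"
    unfolding valid_instance_def using tT0 assms(1)
    by (auto intro!: acyc_rank[where r=id] simp: T0_def)
  define S where "S = run A T0"
  have S: "S \<subseteq> {..<n}" "card S = 2 * k + 1" using assms(2) v0 unfolding S_def by auto
  define W where "W = wins A T0"
  define L where "L = (\<lambda>x. {y. (y,x) \<in> W})"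
  have finW: "finite W" unfolding W_def by (rule wins_finite)
  have finL: "finite (L x)" for x
  proof -
    have "L x \<subseteq> fst ` W" unfolding L_def by force
    then show ?thesis using finW finite_subset by blast
  qed
  define D where "D = {..<n} - S"
  have cardD: "card D = n - (2 * k + 1)" unfolding D_def using S
    by (simp add: card_Diff_subset finite_subset)
  have key: "k + 1 \<le> card (L x)" if xD: "x \<in> D" for x
  proof (rule ccontr)
    assume "\<not> k + 1 \<le> card (L x)"
    then have cL: "card (L x) \<le> k" by simp
    have xn: "x < n" "x \<notin> S" using xD D_def by auto
    have Lsub: "L x \<subseteq> {..<n} - {x}"
    proof
      fix y assume "y \<in> L x"
      then have "(y,x) \<in> wins A T0" unfolding L_def W_def by simp
      then have "T0 y x" using wins_T by fastforce
      then show "y \<in> {..<n} - {x}" unfolding T0_def by simp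
    qed
    have kc: "k \<le> card ({..<n} - {x})" using xn assms(1) by simp
    have "finite ({..<n} - {x})" by simp
    from exists_subset_between[OF cL kc Lsub this]
    obtain C where C: "L x \<subseteq> C" "C \<subseteq> {..<n} - {x}" "card C = k"
      by blast
    define T' where "T' = (\<lambda>i j. if i = x \<and> j \<notin> C then j < n \<and> j \<noteq> x
       else if j = x \<and> i \<notin> C then False else T0 i j)"
    have tT': "tournament n T'" unfolding tournament_def T'_def T0_def
      using xn C by auto
    have vT': "valid_instance n k T' C"
      unfolding valid_instance_def using tT' C
      by (auto intro!: acyc_rank[where r="\<lambda>i. if i = x then n else i"]
          simp: T'_def T0_def split: if_splits)
    have um: "uncorrupted_max n T' C x"
      unfolding uncorrupted_max_def T'_def using xn C by auto
    have ag: "\<forall>p \<in> wins A T0. T' (fst p) (snd p)"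
    proof
      fix p assume p: "p \<in> wins A T0"
      obtain i j where pij: "p = (i,j)" by force
      have "T0 i j" using wins_T[OF p] pij by simp
      moreover have "\<not> (j = x \<and> i \<notin> C)"
        using p pij C(1) unfolding L_def W_def by auto
      ultimately show "T' (fst p) (snd p)" unfolding pij T'_def T0_def by auto
    qed
    have "\<forall>i j. T' i j \<longrightarrow> \<not> T' j i" using tT' unfolding tournament_def by blast
    moreover have "\<forall>i j. T' i j \<longrightarrow> T0 i j \<or> T0 j i"
      using tT' unfolding tournament_def T0_def by (metis linorder_neqE_nat)
    ultimately have "run A T' = S" using run_agree[OF ag] S_def by simp
    then have "x \<in> S" using assms(2) vT' um by auto
    then show False using xn by simp
  qed
  have "(n - (2 * k + 1)) * (k + 1) \<le> (\<Sum>x\<in>D. card (L x))"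
    using sum_bounded_below[of D "k+1" "\<lambda>x. card (L x)"] key cardD by simp
  also have "\<dots> = card (SIGMA x:D. L x)"
    using finL by (simp add: D_def)
  also have "\<dots> = card ((\<lambda>(a,b). (b,a)) ` (SIGMA x:D. L x))"
    by (rule card_image[symmetric]) (auto simp: inj_on_def)
  also have "\<dots> \<le> card W"
    by (rule card_mono[OF finW]) (auto simp: L_def)
  also have "\<dots> \<le> queries A T0" unfolding W_def by (rule wins_card)
  finally show ?thesis using v0 by blast
qed

end
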